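(* Let $m\ge2$, $q\ge2$ be integers, $\Omega$ a nonempty closed subset of $\Sigma_m$, $\overline{t}$ the unique vector in $[1,m^{1/(q-1)}]^{\mathrm{Pref}(\Omega)}$ with $t_u^q=\sum_{j:\,uj\in\mathrm{Pref}(\Omega)}t_{uj}$, $\mu$ the probability measure on $\Omega$ with $\mu[u]=\prod_{j=1}^k t_{u_1\cdots u_j}/t^q_{u_1\cdots u_{j-1}}$ for $u\in\mathrm{Pref}_k(\Omega)$, and $\mathbb{P}_\mu$ the corresponding measure on $X_\Omega$. For $x\in X_\Omega$ and $\ell\ge1$ put $$a_\ell(x):=\frac{-\log_m\mathbb{P}_\mu[x_1^{n}]}{n},\qquad n=q^\ell.$$ Then for every $x\in X_\Omega$, $$\lim_{\ell\to\infty}\frac{a_1(x)+\cdots+a_\ell(x)}{\ell}=(q-1)\log_m t_\varnothing,$$ and in particular $\liminf_{\ell\to\infty}a_\ell(x)\le(q-1)\log_m t_\varnothing$ for every $x\in X_\Omega$.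
   Context: $\Sigma_m=\{0,\dots,m-1\}^{\mathbb N}$; $[u]$ is the cylinder of sequences beginning with word $u$; $x_1^n=x_1\cdots x_n$. $\mathrm{Pref}_0(\Omega)=\{\varnothing\}$, $\mathrm{Pref}_k(\Omega)=\{u\in\{0,\dots,m-1\}^k:\ \Omega\cap[u]\ne\emptyset\}$, $\mathrm{Pref}(\Omega)=\bigcup_k\mathrm{Pref}_k(\Omega)$. $X_\Omega := \{x\in\Sigma_m:\ (x_{iq^\ell})_{\ell\ge0}\in\Omega \text{ for all } i\ge1,\ q\nmid i\}$. For $q\nmid i$, $J_i=\{q^ri\}_{r\ge0}$ and $u|J_i=u_iu_{qi}\cdots u_{q^ri}$ with $q^ri\le|u|<q^{r+1}i$; $\mathbb{P}_\mu[u]=\prod_{i\le|u|,\,q\nmid i}\mu[u|J_i]$. *)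

theory Defs
  imports "HOL-Analysis.Analysis"
begin

text \<open>Sequences in \<Sigma>_m are functions nat \<Rightarrow> nat; the paper's x_k (k \<ge> 1) is x (k - 1).
  Words are lists; the paper's u_k (k \<ge> 1) is u ! (k - 1).
  The topology on nat \<Rightarrow> nat is the product topology of discrete nat.\<close>

definition Sigma :: "nat \<Rightarrow> (nat \<Rightarrow> nat) set" where
  "Sigma m = {x. \<forall>i. x i < m}"

definition cyl :: "nat list \<Rightarrow> (nat \<Rightarrow> nat) set" where
  "cyl u = {x. map x [0..<length u] = u}"

definition Pref_k :: "nat \<Rightarrow> nat \<Rightarrow> (nat \<Rightarrow> nat) set \<Rightarrow> nat list set" where
  "Pref_k m k \<Omega> = {u. length u = k \<and> (\<forall>a\<in>set u. a < m) \<and> \<Omega> \<inter> cyl u \<noteq> {}}"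

definition Pref :: "nat \<Rightarrow> (nat \<Rightarrow> nat) set \<Rightarrow> nat list set" where
  "Pref m \<Omega> = (\<Union>k. Pref_k m k \<Omega>)"

definition X_Omega :: "nat \<Rightarrow> nat \<Rightarrow> (nat \<Rightarrow> nat) set \<Rightarrow> (nat \<Rightarrow> nat) set" where
  "X_Omega m q \<Omega> = {x \<in> Sigma m. \<forall>i. 1 \<le> i \<and> \<not> q dvd i \<longrightarrow> (\<lambda>l. x (i * q ^ l - 1)) \<in> \<Omega>}"

definition mu_cyl :: "nat \<Rightarrow> nat \<Rightarrow> (nat \<Rightarrow> nat) set \<Rightarrow> (nat list \<Rightarrow> real) \<Rightarrow> nat list \<Rightarrow> real" where
  "mu_cyl m q \<Omega> t u = (if u \<in> Pref m \<Omega>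
      then (\<Prod>j=1..length u. t (take j u) / t (take (j - 1) u) ^ q) else 0)"

text \<open>u|J_i = u_i u_{qi} ... u_{q^r i}, with q^r i \<le> |u| < q^(r+1) i.\<close>
definition restrJ :: "nat \<Rightarrow> nat list \<Rightarrow> nat \<Rightarrow> nat list" where
  "restrJ q u i = map (\<lambda>r. u ! (q ^ r * i - 1)) (filter (\<lambda>r. q ^ r * i \<le> length u) [0..<length u + 1])"

definition P_mu :: "nat \<Rightarrow> nat \<Rightarrow> (nat \<Rightarrow> nat) set \<Rightarrow> (nat list \<Rightarrow> real) \<Rightarrow> nat list \<Rightarrow> real" where
  "P_mu m q \<Omega> t u = (\<Prod>i \<in> {i. 1 \<le> i \<and> i \<le> length u \<and> \<not> q dvd i}. mu_cyl m q \<Omega> t (restrJ q u i))"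

definition a_seq :: "nat \<Rightarrow> nat \<Rightarrow> (nat \<Rightarrow> nat) set \<Rightarrow> (nat list \<Rightarrow> real) \<Rightarrow> nat \<Rightarrow> (nat \<Rightarrow> nat) \<Rightarrow> real" where
  "a_seq m q \<Omega> t l x = (let n = q ^ l in - log m (P_mu m q \<Omega> t (map x [0..<n])) / n)"

end

theory Submission
  imports Defs
begin


lemma K_char:
  fixes q i n r :: nat assumes "q \<ge> 2" "i \<ge> 1"
  shows "q^r * i \<le> n \<longleftrightarrow> r < (LEAST r. \<not> q^r*i \<le> n)"
proof -
  have ex: "\<not> q^n*i \<le> n"
  proof -
    have "n < 2^n" by (rule less_exp)
    also have "2^n \<le> q^n" using assms by (simp add: power_mono)
    also have "q^n \<le> q^n*i" using assms by simp
    finally show ?thesis by simp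
  qed
  define k where "k = (LEAST r. \<not> q^r*i \<le> n)"
  have nk: "\<not> q^k*i \<le> n" unfolding k_def using ex by (rule LeastI)
  show ?thesis
  proof
    assume h: "q^r * i \<le> n"
    show "r < (LEAST r. \<not> q^r*i \<le> n)"
    proof (rule ccontr)
      assume "\<not> r < (LEAST r. \<not> q^r*i \<le> n)"
      then have "k \<le> r" unfolding k_def by simp
      then have "q^k \<le> q^r" using assms by (simp add: power_increasing)
      then have "q^k*i \<le> q^r*i" by simp
      with h nk show False by simp
    qed
  next
    assume "r < (LEAST r. \<not> q^r*i \<le> n)"
    then show "q^r * i \<le> n" using not_less_Least by blast
  qed
qed

lemma filter_lt_upt: "filter (\<lambda>r. r < k) [0..<N] = [0..<min k N]"
  by (induction N) auto

lemma filter_K: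
  assumes "\<And>r. P r \<longleftrightarrow> r < k" "k \<le> N"
  shows "filter P [0..<N] = [0..<k]"
proof -
  have "filter P [0..<N] = filter (\<lambda>r. r < k) [0..<N]" using assms(1) by (intro filter_cong) auto
  then show ?thesis using assms(2) filter_lt_upt by (simp add: min_absorb1)
qed

lemma nat_eq_by_less: fixes a b :: nat assumes "\<And>r. r < a \<longleftrightarrow> r < b" shows "a = b"
  using assms by (metis less_irrefl nat_neq_iff)

lemma card_nondiv:
  fixes q a :: nat assumes "q \<ge> 1"
  shows "card {i. 1 \<le> i \<and> i \<le> q*a \<and> \<not> q dvd i} = q*a - a"
proof -
  let ?A = "{i. 1 \<le> i \<and> i \<le> q*a \<and> \<not> q dvd i}"
  let ?M = "(\<lambda>j. q*j) ` {1..a}"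
  have un: "{1..q*a} = ?A \<union> ?M"
  proof (intro equalityI subsetI)
    fix i assume i: "i \<in> {1..q*a}"
    show "i \<in> ?A \<union> ?M"
    proof (cases "q dvd i")
      case True
      then obtain j where j: "i = q*j" by auto
      have "1 \<le> j" using i j by (cases j) auto
      moreover have "j \<le> a" using i j assms by auto
      ultimately show ?thesis using j by auto
    qed (use i in auto)
  next
    fix i assume "i \<in> ?A \<union> ?M"
    then show "i \<in> {1..q*a}" using assms by auto
  qed
  have disj: "?A \<inter> ?M = {}" by auto
  have cM: "card ?M = a" using assms by (subst card_image) (auto simp: inj_on_def)
  have "q*a = card ?A + card ?M" using un disj by (metis card_atLeastAtMost card_Un_disjoint diff_Suc_1 finite_Un finite_atLeastAtMost)
  then show ?thesis using cM by simp
qed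

lemma sum_shift1:
  fixes f :: "nat \<Rightarrow> real" assumes "k \<ge> 1"
  shows "(\<Sum>j=1..k. f (j-1)) = f 0 + (\<Sum>j=1..k-1. f j)"
proof -
  obtain k' where k: "k = Suc k'" using assms by (cases k) auto
  show ?thesis unfolding k
    by (induction k') (auto simp: sum.atLeast_Suc_atMost)
qed



theorem lemma5p2:
  fixes m q :: nat and \<Omega> :: "(nat \<Rightarrow> nat) set" and t :: "nat list \<Rightarrow> real"
  assumes "m \<ge> 2" and "q \<ge> 2"
    and "\<Omega> \<noteq> {}" and "\<Omega> \<subseteq> Sigma m" and "closed \<Omega>"
    and "\<And>u. u \<in> Pref m \<Omega> \<Longrightarrow> 1 \<le> t u \<and> t u \<le> real m powr (1 / (real q - 1))"
    and "\<And>u. u \<in> Pref m \<Omega> \<Longrightarrow>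
           t u ^ q = (\<Sum>j\<in>{j. j < m \<and> u @ [j] \<in> Pref m \<Omega>}. t (u @ [j]))"
    and "x \<in> X_Omega m q \<Omega>"
  shows "((\<lambda>l. (\<Sum>k=1..l. a_seq m q \<Omega> t k x) / real l)
           \<longlonglongrightarrow> (real q - 1) * log m (t [])) \<and>
         liminf (\<lambda>l. ereal (a_seq m q \<Omega> t l x)) \<le> ereal ((real q - 1) * log m (t []))"
proof -
  have m2: "m \<ge> 2" and q2: "q \<ge> 2" using assms by auto
  note Pb = assms(6)
  define w where "w i j = map (\<lambda>r. x (i * q^r - 1)) [0..<j]" for i j :: nat
  define g where "g i j = ln (t (w i j))" for i j
  define K where "K n i = (LEAST r. \<not> q^r*i \<le> n)" for n i :: nat
  define Is where "Is n = {i. 1 \<le> i \<and> i \<le> n \<and> \<not> q dvd i}" for n :: nat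
  define B where "B = ln (real m powr (1/(real q - 1)))"
  define L0 where "L0 = ln (t [])"
  have finIs: "finite (Is n)" for n unfolding Is_def by auto
  have Kc: "q^r*i \<le> n \<longleftrightarrow> r < K n i" if "i \<ge> 1" for r i n
    unfolding K_def by (rule K_char[OF q2 that])
  have wP: "w i j \<in> Pref m \<Omega>" if "i \<ge> 1" "\<not> q dvd i" for i j
  proof -
    have y: "(\<lambda>l. x (i * q^l - 1)) \<in> \<Omega>" using assms(8) that unfolding X_Omega_def by auto
    hence lt: "\<forall>l. x (i*q^l - 1) < m" using assms(4) unfolding Sigma_def by auto
    have "w i j \<in> Pref_k m j \<Omega>"
      unfolding Pref_k_def cyl_def w_def using y lt by auto
    then show ?thesis unfolding Pref_def by auto
  qed
  have w0: "w i 0 = []" for i unfolding w_def by simp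
  have tpos: "t (w i j) \<ge> 1" if "i \<ge> 1" "\<not> q dvd i" for i j using Pb[OF wP[OF that]] by simp
  have g_bd: "0 \<le> g i j \<and> g i j \<le> B" if "i \<ge> 1" "\<not> q dvd i" for i j
  proof -
    have "1 \<le> t (w i j)" "t (w i j) \<le> real m powr (1/(real q - 1))" using Pb[OF wP[OF that]] by auto
    moreover have "0 < real m powr (1/(real q - 1))" using m2 by simp
    ultimately have "ln (t (w i j)) \<le> ln (real m powr (1/(real q - 1)))"
      using ln_le_cancel_iff[of "t (w i j)" "real m powr (1/(real q - 1))"] by linarith
    moreover have "0 \<le> ln (t (w i j))" using \<open>1 \<le> t (w i j)\<close> by simp
    ultimately show ?thesis unfolding g_def B_def by auto
  qed
  have tnz: "t (w i j) \<noteq> 0" if "i \<ge> 1" "\<not> q dvd i" for i j using tpos[OF that, of j] by auto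
  have q1: "\<not> q dvd 1" using q2 by auto
  have B0: "0 \<le> B" using g_bd[OF _ q1, of 0] by auto
  have gL0: "g i 0 = L0" for i unfolding g_def L0_def w0 by simp
  have Kpos: "K n i \<ge> 1" if "1 \<le> i" "i \<le> n" for n i using Kc[OF that(1), of 0 n] that by simp
  have restr: "restrJ q (map x [0..<n]) i = w i (K n i)" if "i \<ge> 1" for n i
  proof -
    have "n < 2^n" by (rule less_exp)
    also have "2^n \<le> q^n" using q2 by (simp add: power_mono)
    also have "q^n \<le> q^n*i" using that by simp
    finally have "\<not> n < K n i" using Kc[OF that, of n n] by simp
    then have Kn: "K n i \<le> n+1" by simp
    have f: "filter (\<lambda>r. q^r*i \<le> length (map x [0..<n])) [0..<length (map x [0..<n]) + 1] = [0..<K n i]"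
      by (rule filter_K) (use Kc[OF that] Kn in auto)
    have "map (\<lambda>r. (map x [0..<n]) ! (q^r*i - 1)) [0..<K n i] = w i (K n i)"
      unfolding w_def
    proof (rule map_cong[OF refl])
      fix r assume "r \<in> set [0..<K n i]"
      then have "q^r*i \<le> n" using Kc[OF that] by simp
      moreover have "q^r*i \<ge> 1" using that q2 by simp
      ultimately have "q^r*i - 1 < n" by linarith
      then show "(map x [0..<n]) ! (q^r*i - 1) = x (i * q^r - 1)"
        by (simp add: mult.commute)
    qed
    then show ?thesis unfolding restrJ_def f by simp
  qed
  have mu: "mu_cyl m q \<Omega> t (w i k) = (\<Prod>j=1..k. t (w i j) / t (w i (j-1))^q)"
    if "i\<ge>1" "\<not>q dvd i" for i k
  proof -
    have len: "length (w i k) = k" unfolding w_def by simp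
    have tk: "take j (w i k) = w i j" if "j \<le> k" for j unfolding w_def using that
      by (simp add: take_map min_absorb1)
    show ?thesis unfolding mu_cyl_def using wP[OF that] len
      by (auto intro!: prod.cong simp: tk)
  qed
  have lnmu: "ln (mu_cyl m q \<Omega> t (w i k)) = (\<Sum>j=1..k. g i j - q * g i (j-1))"
    if "i\<ge>1" "\<not>q dvd i" for i k
  proof -
    have "ln (mu_cyl m q \<Omega> t (w i k)) = (\<Sum>j=1..k. ln (t (w i j) / t (w i (j-1))^q))"
      unfolding mu[OF that] using tnz[OF that] by (intro ln_prod) auto
    also have "\<dots> = (\<Sum>j=1..k. g i j - q * g i (j-1))"
      unfolding g_def using tnz[OF that]
      by (intro sum.cong refl) (simp add: ln_div ln_realpow)
    finally show ?thesis .
  qed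
  have mupos: "mu_cyl m q \<Omega> t (w i k) > 0" if "i\<ge>1" "\<not>q dvd i" for i k
    unfolding mu[OF that] using tpos[OF that]
    by (intro prod_pos) (auto simp: less_le_trans[OF zero_less_one])
  have lnP: "ln (P_mu m q \<Omega> t (map x [0..<n])) = (\<Sum>i\<in>Is n. \<Sum>j=1..K n i. g i j - q * g i (j-1))" for n
  proof -
    have "P_mu m q \<Omega> t (map x [0..<n]) = (\<Prod>i\<in>Is n. mu_cyl m q \<Omega> t (w i (K n i)))"
      unfolding P_mu_def Is_def by (intro prod.cong) (auto simp: restr)
    also have "ln \<dots> = (\<Sum>i\<in>Is n. ln (mu_cyl m q \<Omega> t (w i (K n i))))"
      using mupos finIs unfolding Is_def by (intro ln_prod) (auto simp: less_imp_neq[symmetric])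
    finally show ?thesis using lnmu unfolding Is_def by (auto intro!: sum.cong)
  qed
  define s where "s l = (\<Sum>i\<in>Is (q^l). \<Sum>j=1..K (q^l) i. g i j)" for l :: nat
  define s' where "s' l = (\<Sum>i\<in>Is (q^l). \<Sum>j=1..K (q^l) i - 1. g i j)" for l :: nat
  have IsD: "1 \<le> i" "i \<le> n" "\<not> q dvd i" if "i \<in> Is n" for i n using that unfolding Is_def by auto
  have lnP2: "ln (P_mu m q \<Omega> t (map x [0..<q^l])) = s l - q * card (Is (q^l)) * L0 - q * s' l" for l
  proof -
    have "(\<Sum>j=1..K (q^l) i. g i j - q * g i (j-1)) = (\<Sum>j=1..K (q^l) i. g i j) - q * L0 - q * (\<Sum>j=1..K (q^l) i - 1. g i j)"
      if "i \<in> Is (q^l)" for i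
    proof -
      have "(\<Sum>j=1..K (q^l) i. g i j - q * g i (j-1)) = (\<Sum>j=1..K (q^l) i. g i j) - q * (\<Sum>j=1..K (q^l) i. g i (j-1))"
        by (simp add: sum_subtractf sum_distrib_left)
      also have "(\<Sum>j=1..K (q^l) i. g i (j-1)) = L0 + (\<Sum>j=1..K (q^l) i - 1. g i j)"
        using sum_shift1[OF Kpos[OF IsD(1,2)[OF that]], of "g i"] gL0 by simp
      finally show ?thesis by (simp add: algebra_simps)
    qed
    then have "ln (P_mu m q \<Omega> t (map x [0..<q^l])) = (\<Sum>i\<in>Is (q^l). (\<Sum>j=1..K (q^l) i. g i j) - q * L0 - q * (\<Sum>j=1..K (q^l) i - 1. g i j))"
      unfolding lnP by (intro sum.cong) auto
    also have "\<dots> = s l - q * card (Is (q^l)) * L0 - q * s' l"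
      unfolding s_def s'_def by (simp add: sum_subtractf sum_distrib_left)
    finally show ?thesis .
  qed
  have Kstep: "K (q^Suc l) i = Suc (K (q^l) i)" if "1 \<le> i" "i \<le> q^l" for i l
  proof (rule nat_eq_by_less)
    fix r show "r < K (q^Suc l) i \<longleftrightarrow> r < Suc (K (q^l) i)"
    proof (cases r)
      case 0 then show ?thesis using Kc[OF that(1), of 0 "q^Suc l"] that q2
        by (simp add: order_trans[OF that(2)])
    next
      case (Suc r')
      have "q^r*i \<le> q^Suc l \<longleftrightarrow> q^r'*i \<le> q^l" unfolding Suc using q2 by simp
      then show ?thesis using Kc[OF that(1), of r "q^Suc l"] Kc[OF that(1), of r' "q^l"] Suc by simp
    qed
  qed
  have Knew: "K (q^Suc l) i = 1" if "q^l < i" "i \<le> q^Suc l" for i l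
  proof (rule nat_eq_by_less)
    have i1: "1 \<le> i" using that by simp
    fix r show "r < K (q^Suc l) i \<longleftrightarrow> r < 1"
    proof (cases r)
      case 0 then show ?thesis using Kc[OF i1, of 0 "q^Suc l"] that by simp
    next
      case (Suc r')
      have "q^Suc l = q * q^l" by simp
      also have "\<dots> < q * i" using that q2 by simp
      also have "\<dots> \<le> q * q^r' * i" using q2 by simp
      also have "\<dots> = q^r * i" unfolding Suc by simp
      finally show ?thesis using Kc[OF i1, of r "q^Suc l"] Suc by simp
    qed
  qed
  have IsSplit: "Is (q^Suc l) = Is (q^l) \<union> {i. q^l < i \<and> i \<le> q^Suc l \<and> \<not> q dvd i}" for l
    unfolding Is_def using q2 by (auto simp: order_trans[of _ "q^l" "q*q^l"])
  have s'S: "s' (Suc l) = s l" for l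
  proof -
    have "s' (Suc l) = (\<Sum>i\<in>Is (q^l). \<Sum>j=1..K (q^Suc l) i - 1. g i j) + (\<Sum>i\<in>{i. q^l < i \<and> i \<le> q^Suc l \<and> \<not> q dvd i}. \<Sum>j=1..K (q^Suc l) i - 1. g i j)"
      unfolding s'_def IsSplit[of l] by (rule sum.union_disjoint) (auto simp: Is_def)
    also have "(\<Sum>i\<in>{i. q^l < i \<and> i \<le> q^Suc l \<and> \<not> q dvd i}. \<Sum>j=1..K (q^Suc l) i - 1. g i j) = 0"
    proof -
      have "K (q^Suc l) i = 1" if "i \<in> {i. q^l < i \<and> i \<le> q^Suc l \<and> \<not> q dvd i}" for i
        using Knew that by blast
      then show ?thesis by (intro sum.neutral) simp
    qed
    also have "(\<Sum>i\<in>Is (q^l). \<Sum>j=1..K (q^Suc l) i - 1. g i j) = s l"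
    proof -
      have "K (q^Suc l) i - 1 = K (q^l) i" if "i \<in> Is (q^l)" for i
        using Kstep[OF IsD(1,2)[OF that]] by simp
      then show ?thesis unfolding s_def by (intro sum.cong refl) simp
    qed
    finally show ?thesis by simp
  qed
  have cardIs: "card (Is (q^Suc l)) = q^Suc l - q^l" for l
    unfolding Is_def using card_nondiv[of q "q^l"] q2 by simp
  have cardle: "card (Is n) \<le> n" for n
  proof -
    have "Is n \<subseteq> {1..n}" unfolding Is_def by auto
    then show ?thesis by (metis card_atLeastAtMost card_mono diff_Suc_1 finite_atLeastAtMost)
  qed
  have s_nn: "0 \<le> s l" for l
    unfolding s_def using g_bd IsD by (meson sum_nonneg)
  have s_ub: "s l \<le> 2 * B * q^l" for l
  proof (induction l)
    case 0
    have "Is (q^0) = {1}" unfolding Is_def using q1 by auto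
    moreover have "K 1 1 = 1"
    proof (rule nat_eq_by_less)
      fix r
      have "q^r * 1 \<le> 1 \<longleftrightarrow> r = 0"
      proof (cases r)
        case (Suc r')
        have "1 \<le> q^r'" using q2 by simp
        then have "2 \<le> q * q^r'" using q2 by (metis mult_le_mono nat_mult_1_right)
        then show ?thesis using Suc by simp
      qed simp
      then show "r < K 1 1 \<longleftrightarrow> r < 1" using Kc[of 1 r 1] by simp
    qed
    ultimately have "s 0 = g 1 1" unfolding s_def by simp
    then show ?case using g_bd[OF _ q1, of 1] B0 by simp
  next
    case (Suc l)
    have "s (Suc l) = s' (Suc l) + (\<Sum>i\<in>Is (q^Suc l). g i (K (q^Suc l) i))"
    proof -
      have "(\<Sum>j=1..K (q^Suc l) i. g i j) = (\<Sum>j=1..K (q^Suc l) i - 1. g i j) + g i (K (q^Suc l) i)"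
        if hi: "i \<in> Is (q^Suc l)" for i
      proof -
        obtain k where k: "K (q^Suc l) i = Suc k" using Kpos[OF IsD(1,2)[OF hi]] by (cases "K (q^Suc l) i") auto
        show ?thesis unfolding k by simp
      qed
      then show ?thesis unfolding s_def s'_def by (simp add: sum.distrib[symmetric] cong: sum.cong)
    qed
    also have "(\<Sum>i\<in>Is (q^Suc l). g i (K (q^Suc l) i)) \<le> (\<Sum>i\<in>Is (q^Suc l). B)"
      by (intro sum_mono) (auto dest: IsD intro: g_bd[THEN conjunct2])
    also have "\<dots> \<le> q^Suc l * B"
    proof -
      have "real (card (Is (q^Suc l))) \<le> real (q^Suc l)" using cardle[of "q^Suc l"] by linarith
      then have "real (card (Is (q^Suc l))) * B \<le> real (q^Suc l) * B" using B0 by (rule mult_right_mono)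
      then show ?thesis by simp
    qed
    finally have "s (Suc l) \<le> 2 * B * q^l + q^Suc l * B" using Suc s'S by simp
    also have "\<dots> \<le> 2 * B * q^Suc l"
    proof -
      have "2 * real q^l \<le> real q ^ Suc l" using q2 by simp
      then have "B * (2 * real q^l) \<le> B * real q ^ Suc l" using B0 by (rule mult_left_mono)
      then show ?thesis by (simp add: algebra_simps)
    qed
    finally show ?case .
  qed
  define b where "b l = s l / real q ^ l" for l
  define c where "c = (real q - 1) * L0 / ln (real m)"
  have lnm: "ln (real m) > 0" using m2 by simp
  have qpos: "real q > 0" using q2 by simp
  have b_bd: "0 \<le> b l \<and> b l \<le> 2 * B" for l
    using s_nn[of l] s_ub[of l] qpos unfolding b_def by (auto simp: divide_simps)
  have a_form: "a_seq m q \<Omega> t (Suc l) x = c + (b l - b (Suc l)) / ln (real m)" for l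
  proof -
    have cr: "real (card (Is (q^Suc l))) = real q * real q^l - real q^l"
      unfolding cardIs using q2 by (simp add: of_nat_diff)
    have cr': "real (card (Is (q * q^l))) = real q * real q^l - real q^l" using cr by simp
    have "a_seq m q \<Omega> t (Suc l) x = - (ln (P_mu m q \<Omega> t (map x [0..<q^Suc l])) / ln (real m)) / real (q^Suc l)"
      unfolding a_seq_def Let_def log_def by simp
    also have "\<dots> = - ((s (Suc l) - q * card (Is (q^Suc l)) * L0 - q * s l) / ln (real m)) / real (q^Suc l)"
      unfolding lnP2 s'S ..
    also have "\<dots> = c + (b l - b (Suc l)) / ln (real m)"
      unfolding c_def b_def using lnm qpos by (simp add: field_simps cr')
    finally show ?thesis .
  qed
  have sumA: "(\<Sum>k=1..l. a_seq m q \<Omega> t k x) = l * c + (b 0 - b l) / ln (real m)" for l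
  proof -
    have "(\<Sum>k=1..l. a_seq m q \<Omega> t k x) = (\<Sum>k<l. a_seq m q \<Omega> t (Suc k) x)"
      using sum.atLeast1_atMost_eq[of "\<lambda>k. a_seq m q \<Omega> t k x" l] by simp
    also have "\<dots> = (\<Sum>k<l. c + (b k - b (Suc k)) / ln (real m))" unfolding a_form ..
    also have "\<dots> = l * c + (\<Sum>k<l. b k - b (Suc k)) / ln (real m)"
      by (simp add: sum.distrib sum_divide_distrib)
    also have "(\<Sum>k<l. b k - b (Suc k)) = b 0 - b l" by (rule sum_lessThan_telescope')
    finally show ?thesis .
  qed
  have cval: "(real q - 1) * log m (t []) = c" unfolding c_def L0_def log_def by simp
  have lim: "(\<lambda>l. (\<Sum>k=1..l. a_seq m q \<Omega> t k x) / real l) \<longlonglongrightarrow> c"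
  proof -
    have z: "(\<lambda>l. (b 0 - b l) / ln (real m) / real l) \<longlonglongrightarrow> 0"
    proof (rule Lim_null_comparison)
      show "\<forall>\<^sub>F l in sequentially. norm ((b 0 - b l) / ln (real m) / real l) \<le> (2 * B / ln (real m)) / real l"
      proof (rule always_eventually, rule allI)
        fix l
        have "\<bar>b 0 - b l\<bar> \<le> 2 * B" using b_bd[of 0] b_bd[of l] by auto
        then have "\<bar>b 0 - b l\<bar> / ln (real m) \<le> 2 * B / ln (real m)" using lnm by (simp add: divide_right_mono)
        then have "\<bar>b 0 - b l\<bar> / ln (real m) / real l \<le> 2 * B / ln (real m) / real l"
          by (rule divide_right_mono) simp
        moreover have "norm ((b 0 - b l) / ln (real m) / real l) = \<bar>b 0 - b l\<bar> / ln (real m) / real l"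
          by (simp only: real_norm_def abs_divide abs_of_pos[OF lnm] abs_of_nat)
        ultimately show "norm ((b 0 - b l) / ln (real m) / real l) \<le> (2 * B / ln (real m)) / real l"
          by linarith
      qed
      show "(\<lambda>l. (2 * B / ln (real m)) / real l) \<longlonglongrightarrow> 0" by (rule lim_const_over_n)
    qed
    have "(\<lambda>l. c + (b 0 - b l) / ln (real m) / real l) \<longlonglongrightarrow> c + 0"
      by (intro tendsto_add tendsto_const z)
    moreover have "\<forall>\<^sub>F l in sequentially. c + (b 0 - b l) / ln (real m) / real l = (\<Sum>k=1..l. a_seq m q \<Omega> t k x) / real l"
      using eventually_ge_at_top[of 1]
    proof eventually_elim
      case (elim l)
      then show ?case unfolding sumA using lnm by (simp add: field_simps)
    qed
    ultimately show ?thesis by (simp add: tendsto_cong)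
  qed
  have liminf: "liminf (\<lambda>l. ereal (a_seq m q \<Omega> t l x)) \<le> ereal c"
  proof (rule ccontr)
    assume "\<not> ?thesis"
    then have "ereal c < liminf (\<lambda>l. ereal (a_seq m q \<Omega> t l x))" by simp
    then obtain d where d1: "ereal c < ereal d" and d2: "ereal d < liminf (\<lambda>l. ereal (a_seq m q \<Omega> t l x))"
      using ereal_dense2 by blast
    have "\<forall>\<^sub>F l in sequentially. ereal d < ereal (a_seq m q \<Omega> t l x)" by (rule less_LiminfD[OF d2])
    then obtain N where N: "\<And>l. l \<ge> N \<Longrightarrow> d < a_seq m q \<Omega> t l x"
      unfolding eventually_sequentially by auto
    define e where "e = (d - c) * ln (real m)"
    have e0: "e > 0" unfolding e_def using d1 lnm by simp
    have step: "b (Suc l) < b l - e" if "l \<ge> N" for l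
    proof -
      have "d < c + (b l - b (Suc l)) / ln (real m)" using N[of "Suc l"] that a_form by simp
      then have "(d - c) * ln (real m) < b l - b (Suc l)" using lnm by (simp add: field_simps)
      then show ?thesis unfolding e_def by simp
    qed
    have dec: "b (N + n) \<le> b N - n * e" for n
    proof (induction n)
      case (Suc n)
      have "b (N + Suc n) < b (N + n) - e" using step[of "N+n"] by simp
      then show ?case using Suc by (simp add: algebra_simps)
    qed simp
    obtain n where n: "2 * B < real n * e" using ex_less_of_nat_mult[OF e0] by blast
    have "b (N + n) < 0" using dec[of n] b_bd[of N] n by simp
    then show False using b_bd[of "N+n"] by simp
  qed
  show ?thesis using lim liminf unfolding cval by simp
qed

end
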